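(* Let $\Gamma$ be a finite multiset of formulas and $B$ a formula such that $\Gamma\longrightarrow B$ has a $\mathbf{C}$-proof in which no $\supset$-L, no $\lor$-R and no $\exists$-R rule is used. Then $\Gamma\longrightarrow B$ has an $\mathbf{I}$-proof.
   Context: Formulas are first-order formulas built from atomic formulas and the logical constants $\top$, $\bot$ (not counted as atomic) using $\land,\lor,\supset,\forall,\exists$; $\neg A$ abbreviates $A\supset\bot$; $B[t/x]$ is capture-avoiding substitution of term $t$ for free $x$ in $B$. A sequent $\Gamma\longrightarrow\Delta$ is a pair of finite multisets of formulas; $B,\Gamma$ denotes $\Gamma$ with an extra occurrence of $B$. A sequent is an axiom if $\top\in\Delta$ or some formula that is $\bot$ or atomic occurs in both $\Gamma$ and $\Delta$. Writing premises $\Rightarrow$ conclusion, the rules are all instances of: contr-L: $B,B,\Gamma\longrightarrow\Delta\Rightarrow B,\Gamma\longrightarrow\Delta$; contr-R: $\Gamma\longrightarrow\Delta,B,B\Rightarrow\Gamma\longrightarrow\Delta,B$; $\bot$-R: $\Gamma\longrightarrow\Delta,\bot\Rightarrow\Gamma\longrightarrow\Delta,D$; $\land$-L: $B,\Gamma\longrightarrow\Delta\Rightarrow B\land D,\Gamma\longrightarrow\Delta$ and $D,\Gamma\longrightarrow\Delta\Rightarrow B\land D,\Gamma\longrightarrow\Delta$; $\lor$-L: $B,\Gamma\longrightarrow\Delta$ and $D,\Gamma\longrightarrow\Delta\Rightarrow B\lor D,\Gamma\longrightarrow\Delta$; $\land$-R: $\Gamma\longrightarrow\Delta,B$ and $\Gamma\longrightarrow\Delta,D\Rightarrow\Gamma\longrightarrow\Delta,B\land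 D$; $\lor$-R: $\Gamma\longrightarrow\Delta,B\Rightarrow\Gamma\longrightarrow\Delta,B\lor D$ and $\Gamma\longrightarrow\Delta,D\Rightarrow\Gamma\longrightarrow\Delta,B\lor D$; $\supset$-L: $\Gamma\longrightarrow\Delta,B$ and $D,\Gamma\longrightarrow\Theta\Rightarrow B\supset D,\Gamma\longrightarrow\Delta,\Theta$; $\supset$-R: $B,\Gamma\longrightarrow\Delta,D\Rightarrow\Gamma\longrightarrow\Delta,B\supset D$; $\forall$-L: $B[t/x],\Gamma\longrightarrow\Delta\Rightarrow\forall x B,\Gamma\longrightarrow\Delta$; $\exists$-R: $\Gamma\longrightarrow\Delta,B[t/x]\Rightarrow\Gamma\longrightarrow\Delta,\exists x B$ ($t$ any term); $\exists$-L: $B[c/x],\Gamma\longrightarrow\Delta\Rightarrow\exists x B,\Gamma\longrightarrow\Delta$; $\forall$-R: $\Gamma\longrightarrow\Delta,B[c/x]\Rightarrow\Gamma\longrightarrow\Delta,\forall x B$, where the constant $c$ does not occur in the conclusion. A $\mathbf{C}$-proof (classical) is a finite tree of sequents with axioms at the leaves, each internal node being the conclusion of a rule instance whose premises are its children. An $\mathbf{I}$-proof (intuitionistic) is a $\mathbf{C}$-proof in which every sequent has exactly one formula in its succedent. A rule "is used" if some instance of that schema occurs in the proof. *)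

theory Defs
  imports Main "HOL-Library.Multiset"
begin

section \<open>First-order syntax (de Bruijn indices for bound and free variables)\<close>

datatype trm = Var nat | Fun nat "trm list"

datatype fm =
    Atom nat "trm list"
  | Top
  | Bot
  | And fm fm
  | Or fm fm
  | Imp fm fm
  | All fm
  | Ex fm

text \<open>Constants are nullary function symbols \<open>Fun c []\<close>.\<close>

primrec consts_trm :: "trm \<Rightarrow> nat set"
  and consts_trms :: "trm list \<Rightarrow> nat set" where
  "consts_trm (Var i) = {}"
| "consts_trm (Fun f ts) = (if ts = [] then {f} else consts_trms ts)"
| "consts_trms [] = {}"
| "consts_trms (t # ts) = consts_trm t \<union> consts_trms ts"

primrec consts_fm :: "fm \<Rightarrow> nat set" where
  "consts_fm (Atom p ts) = consts_trms ts"
| "consts_fm Top = {}"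
| "consts_fm Bot = {}"
| "consts_fm (And A B) = consts_fm A \<union> consts_fm B"
| "consts_fm (Or A B) = consts_fm A \<union> consts_fm B"
| "consts_fm (Imp A B) = consts_fm A \<union> consts_fm B"
| "consts_fm (All A) = consts_fm A"
| "consts_fm (Ex A) = consts_fm A"

primrec liftt :: "trm \<Rightarrow> trm" and liftts :: "trm list \<Rightarrow> trm list" where
  "liftt (Var i) = Var (Suc i)"
| "liftt (Fun f ts) = Fun f (liftts ts)"
| "liftts [] = []"
| "liftts (t # ts) = liftt t # liftts ts"

primrec substt :: "trm \<Rightarrow> trm \<Rightarrow> nat \<Rightarrow> trm"
  and substts :: "trm list \<Rightarrow> trm \<Rightarrow> nat \<Rightarrow> trm list" where
  "substt (Var i) s k = (if k < i then Var (i - 1) else if i = k then s else Var i)"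
| "substt (Fun f ts) s k = Fun f (substts ts s k)"
| "substts [] s k = []"
| "substts (t # ts) s k = substt t s k # substts ts s k"

primrec subst :: "fm \<Rightarrow> trm \<Rightarrow> nat \<Rightarrow> fm" where
  "subst (Atom p ts) s k = Atom p (substts ts s k)"
| "subst Top s k = Top"
| "subst Bot s k = Bot"
| "subst (And A B) s k = And (subst A s k) (subst B s k)"
| "subst (Or A B) s k = Or (subst A s k) (subst B s k)"
| "subst (Imp A B) s k = Imp (subst A s k) (subst B s k)"
| "subst (All A) s k = All (subst A (liftt s) (Suc k))"
| "subst (Ex A) s k = Ex (subst A (liftt s) (Suc k))"

text \<open>\<open>inst B t\<close> is \<open>B[t/x]\<close> for the body \<open>B\<close> of \<open>\<forall>x B\<close> / \<open>\<exists>x B\<close>.\<close>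
abbreviation inst :: "fm \<Rightarrow> trm \<Rightarrow> fm" where
  "inst B t \<equiv> subst B t 0"

definition is_atom :: "fm \<Rightarrow> bool" where
  "is_atom F \<longleftrightarrow> (\<exists>p ts. F = Atom p ts)"

type_synonym sequent = "fm multiset \<times> fm multiset"

definition is_axiom :: "sequent \<Rightarrow> bool" where
  "is_axiom s \<longleftrightarrow> (Top \<in># snd s \<or>
     (\<exists>F. (F = Bot \<or> is_atom F) \<and> F \<in># fst s \<and> F \<in># snd s))"

definition consts_seq :: "sequent \<Rightarrow> nat set" where
  "consts_seq s = (\<Union>F\<in>set_mset (fst s + snd s). consts_fm F)"

datatype rule = ContrL | ContrR | BotR | AndL | OrL | AndR | OrR | ImpL | ImpR
  | AllL | ExR | ExL | AllR

text \<open>\<open>deriv R P s\<close>: the sequent \<open>s\<close> has a proof (a finite tree) using only rule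
  schemas in \<open>R\<close>, in which every sequent satisfies \<open>P\<close>.\<close>

inductive deriv :: "rule set \<Rightarrow> (sequent \<Rightarrow> bool) \<Rightarrow> sequent \<Rightarrow> bool"
  for R :: "rule set" and P :: "sequent \<Rightarrow> bool" where
  Axiom: "P s \<Longrightarrow> is_axiom s \<Longrightarrow> deriv R P s"
| ContrL: "ContrL \<in> R \<Longrightarrow> P (add_mset B \<Gamma>, \<Delta>) \<Longrightarrow>
    deriv R P (add_mset B (add_mset B \<Gamma>), \<Delta>) \<Longrightarrow> deriv R P (add_mset B \<Gamma>, \<Delta>)"
| ContrR: "ContrR \<in> R \<Longrightarrow> P (\<Gamma>, add_mset B \<Delta>) \<Longrightarrow>
    deriv R P (\<Gamma>, add_mset B (add_mset B \<Delta>)) \<Longrightarrow> deriv R P (\<Gamma>, add_mset B \<Delta>)"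
| BotR: "BotR \<in> R \<Longrightarrow> P (\<Gamma>, add_mset D \<Delta>) \<Longrightarrow>
    deriv R P (\<Gamma>, add_mset Bot \<Delta>) \<Longrightarrow> deriv R P (\<Gamma>, add_mset D \<Delta>)"
| AndL1: "AndL \<in> R \<Longrightarrow> P (add_mset (And B D) \<Gamma>, \<Delta>) \<Longrightarrow>
    deriv R P (add_mset B \<Gamma>, \<Delta>) \<Longrightarrow> deriv R P (add_mset (And B D) \<Gamma>, \<Delta>)"
| AndL2: "AndL \<in> R \<Longrightarrow> P (add_mset (And B D) \<Gamma>, \<Delta>) \<Longrightarrow>
    deriv R P (add_mset D \<Gamma>, \<Delta>) \<Longrightarrow> deriv R P (add_mset (And B D) \<Gamma>, \<Delta>)"
| OrL: "OrL \<in> R \<Longrightarrow> P (add_mset (Or B D) \<Gamma>, \<Delta>) \<Longrightarrow>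
    deriv R P (add_mset B \<Gamma>, \<Delta>) \<Longrightarrow> deriv R P (add_mset D \<Gamma>, \<Delta>) \<Longrightarrow>
    deriv R P (add_mset (Or B D) \<Gamma>, \<Delta>)"
| AndR: "AndR \<in> R \<Longrightarrow> P (\<Gamma>, add_mset (And B D) \<Delta>) \<Longrightarrow>
    deriv R P (\<Gamma>, add_mset B \<Delta>) \<Longrightarrow> deriv R P (\<Gamma>, add_mset D \<Delta>) \<Longrightarrow>
    deriv R P (\<Gamma>, add_mset (And B D) \<Delta>)"
| OrR1: "OrR \<in> R \<Longrightarrow> P (\<Gamma>, add_mset (Or B D) \<Delta>) \<Longrightarrow>
    deriv R P (\<Gamma>, add_mset B \<Delta>) \<Longrightarrow> deriv R P (\<Gamma>, add_mset (Or B D) \<Delta>)"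
| OrR2: "OrR \<in> R \<Longrightarrow> P (\<Gamma>, add_mset (Or B D) \<Delta>) \<Longrightarrow>
    deriv R P (\<Gamma>, add_mset D \<Delta>) \<Longrightarrow> deriv R P (\<Gamma>, add_mset (Or B D) \<Delta>)"
| ImpL: "ImpL \<in> R \<Longrightarrow> P (add_mset (Imp B D) \<Gamma>, \<Delta> + \<Theta>) \<Longrightarrow>
    deriv R P (\<Gamma>, add_mset B \<Delta>) \<Longrightarrow> deriv R P (add_mset D \<Gamma>, \<Theta>) \<Longrightarrow>
    deriv R P (add_mset (Imp B D) \<Gamma>, \<Delta> + \<Theta>)"
| ImpR: "ImpR \<in> R \<Longrightarrow> P (\<Gamma>, add_mset (Imp B D) \<Delta>) \<Longrightarrow>
    deriv R P (add_mset B \<Gamma>, add_mset D \<Delta>) \<Longrightarrow> deriv R P (\<Gamma>, add_mset (Imp B D) \<Delta>)"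
| AllL: "AllL \<in> R \<Longrightarrow> P (add_mset (All B) \<Gamma>, \<Delta>) \<Longrightarrow>
    deriv R P (add_mset (inst B t) \<Gamma>, \<Delta>) \<Longrightarrow> deriv R P (add_mset (All B) \<Gamma>, \<Delta>)"
| ExR: "ExR \<in> R \<Longrightarrow> P (\<Gamma>, add_mset (Ex B) \<Delta>) \<Longrightarrow>
    deriv R P (\<Gamma>, add_mset (inst B t) \<Delta>) \<Longrightarrow> deriv R P (\<Gamma>, add_mset (Ex B) \<Delta>)"
| ExL: "ExL \<in> R \<Longrightarrow> P (add_mset (Ex B) \<Gamma>, \<Delta>) \<Longrightarrow>
    c \<notin> consts_seq (add_mset (Ex B) \<Gamma>, \<Delta>) \<Longrightarrow>
    deriv R P (add_mset (inst B (Fun c [])) \<Gamma>, \<Delta>) \<Longrightarrow> deriv R P (add_mset (Ex B) \<Gamma>, \<Delta>)"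
| AllR: "AllR \<in> R \<Longrightarrow> P (\<Gamma>, add_mset (All B) \<Delta>) \<Longrightarrow>
    c \<notin> consts_seq (\<Gamma>, add_mset (All B) \<Delta>) \<Longrightarrow>
    deriv R P (\<Gamma>, add_mset (inst B (Fun c [])) \<Delta>) \<Longrightarrow> deriv R P (\<Gamma>, add_mset (All B) \<Delta>)"

text \<open>C-proofs using only rules from \<open>R\<close>; I-proofs (every succedent a singleton).\<close>

abbreviation C_proof_using :: "rule set \<Rightarrow> sequent \<Rightarrow> bool" where
  "C_proof_using R s \<equiv> deriv R (\<lambda>_. True) s"

abbreviation I_provable :: "sequent \<Rightarrow> bool" where
  "I_provable s \<equiv> deriv UNIV (\<lambda>s. size (snd s) = 1) s"

end

theory Submission
  imports Defs
begin

primrec rent :: "(nat \<Rightarrow> nat) \<Rightarrow> trm \<Rightarrow> trm" and rents :: "(nat \<Rightarrow> nat) \<Rightarrow> trm list \<Rightarrow> trm list" where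
  "rent \<sigma> (Var i) = Var i"
| "rent \<sigma> (Fun f ts) = (if ts = [] then Fun (\<sigma> f) [] else Fun f (rents \<sigma> ts))"
| "rents \<sigma> [] = []"
| "rents \<sigma> (t # ts) = rent \<sigma> t # rents \<sigma> ts"

primrec renf :: "(nat \<Rightarrow> nat) \<Rightarrow> fm \<Rightarrow> fm" where
  "renf \<sigma> (Atom p ts) = Atom p (rents \<sigma> ts)"
| "renf \<sigma> Top = Top"
| "renf \<sigma> Bot = Bot"
| "renf \<sigma> (And A B) = And (renf \<sigma> A) (renf \<sigma> B)"
| "renf \<sigma> (Or A B) = Or (renf \<sigma> A) (renf \<sigma> B)"
| "renf \<sigma> (Imp A B) = Imp (renf \<sigma> A) (renf \<sigma> B)"
| "renf \<sigma> (All A) = All (renf \<sigma> A)"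
| "renf \<sigma> (Ex A) = Ex (renf \<sigma> A)"

primrec fsize :: "fm \<Rightarrow> nat" where
  "fsize (Atom p ts) = 0"
| "fsize Top = 0"
| "fsize Bot = 0"
| "fsize (And A B) = Suc (fsize A + fsize B)"
| "fsize (Or A B) = Suc (fsize A + fsize B)"
| "fsize (Imp A B) = Suc (fsize A + fsize B)"
| "fsize (All A) = Suc (fsize A)"
| "fsize (Ex A) = Suc (fsize A)"

lemma rents_map[simp]: "rents \<sigma> ts = map (rent \<sigma>) ts" by (induct ts) auto
lemma liftts_map[simp]: "liftts ts = map liftt ts" by (induct ts) auto
lemma substts_map[simp]: "substts ts s k = map (\<lambda>t. substt t s k) ts" by (induct ts) auto
lemma consts_trms_map[simp]: "consts_trms ts = (\<Union>t\<in>set ts. consts_trm t)" by (induct ts) auto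

lemma rent_liftt[simp]: "rent \<sigma> (liftt t) = liftt (rent \<sigma> t)"
  by (induct t) auto
lemma rent_substt[simp]: "rent \<sigma> (substt t s k) = substt (rent \<sigma> t) (rent \<sigma> s) k"
  by (induct t) auto
lemma renf_subst[simp]: "renf \<sigma> (subst A s k) = subst (renf \<sigma> A) (rent \<sigma> s) k"
  by (induct A arbitrary: s k) auto
lemma fsize_subst[simp]: "fsize (subst A s k) = fsize A"
  by (induct A arbitrary: s k) auto
lemma consts_rent[simp]: "consts_trm (rent \<sigma> t) = \<sigma> ` consts_trm t" by (induct t) auto
lemma consts_renf[simp]: "consts_fm (renf \<sigma> A) = \<sigma> ` consts_fm A" by (induct A) (auto simp: image_Un)
lemma rent_cong: "(\<forall>x\<in>consts_trm t. \<sigma> x = \<tau> x) \<Longrightarrow> rent \<sigma> t = rent \<tau> t" by (induct t) auto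
lemma renf_cong: "(\<forall>x\<in>consts_fm A. \<sigma> x = \<tau> x) \<Longrightarrow> renf \<sigma> A = renf \<tau> A"
  by (induct A) (auto intro: rent_cong)
lemma rent_id[simp]: "rent (\<lambda>x. x) t = t" by (induct t) (auto simp: map_idI)
lemma renf_id[simp]: "renf (\<lambda>x. x) A = A" by (induct A) (auto simp: map_idI)
lemma renf_fix: "(\<forall>x\<in>consts_fm A. \<sigma> x = x) \<Longrightarrow> renf \<sigma> A = A"
  using renf_cong[of A \<sigma> "\<lambda>x. x"] by simp
lemma consts_liftt[simp]: "consts_trm (liftt t) = consts_trm t" by (induct t) auto
lemma consts_substt: "consts_trm (substt t s k) \<subseteq> consts_trm t \<union> consts_trm s" by (induct t) auto
lemma consts_subst: "consts_fm (subst A s k) \<subseteq> consts_fm A \<union> consts_trm s"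
  using consts_substt by (induct A arbitrary: s k) fastforce+
lemma finite_consts_trm[simp]: "finite (consts_trm t)" by (induct t) auto
lemma finite_consts_fm[simp]: "finite (consts_fm A)" by (induct A) auto
lemma finite_consts_seq[simp]: "finite (consts_seq s)" by (auto simp: consts_seq_def)
lemma is_atom_renf[simp]: "is_atom (renf \<sigma> F) = is_atom F" by (cases F) (auto simp: is_atom_def)
lemma renf_eq_Bot[simp]: "(renf \<sigma> F = Bot) = (F = Bot)" by (cases F) auto
lemma renf_eq_Top[simp]: "(renf \<sigma> F = Top) = (F = Top)" by (cases F) auto


definition okP :: "(sequent \<Rightarrow> bool) \<Rightarrow> bool" where
  "okP P \<longleftrightarrow> (\<forall>a b c d. size b = size d \<longrightarrow> P (a,b) \<longrightarrow> P (c,d))"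

lemma okP_True[simp]: "okP (\<lambda>_. True)" by (simp add: okP_def)
lemma okP_I[simp]: "okP (\<lambda>s. size (snd s) = 1)" by (simp add: okP_def)

lemma okPD: "okP P \<Longrightarrow> P s \<Longrightarrow> size (snd s') = size (snd s) \<Longrightarrow> P s'"
  unfolding okP_def by (metis prod.collapse)

lemma deriv_ren:
  assumes "deriv R P s" and ok: "okP P"
  shows "deriv R P (image_mset (renf \<sigma>) (fst s) + \<Sigma>, image_mset (renf \<sigma>) (snd s))"
  using assms(1)
proof (induction arbitrary: \<sigma> \<Sigma>)
  case (Axiom s)
  have "P (image_mset (renf \<sigma>) (fst s) + \<Sigma>, image_mset (renf \<sigma>) (snd s))"
    using Axiom(1) ok unfolding okP_def by (metis prod.collapse size_image_mset)
  moreover have "is_axiom (image_mset (renf \<sigma>) (fst s) + \<Sigma>, image_mset (renf \<sigma>) (snd s))"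
    using Axiom(2) unfolding is_axiom_def
    by (auto simp: image_iff intro: bexI[where x=Top]) (metis renf_eq_Bot renf.simps(3) is_atom_renf)+
  ultimately show ?case by (rule deriv.Axiom)
next
  case (ContrL B \<Gamma> \<Delta>)
  note h = ContrL
  show ?case
    apply (simp only: fst_conv snd_conv image_mset_add_mset union_mset_add_mset_left image_mset_union renf.simps renf_subst)
    apply (rule deriv.ContrL)
    using h okPD[OF ok h(2)] by (simp_all add: ac_simps)
next
  case (ContrR \<Gamma> B \<Delta>)
  note h = ContrR
  show ?case
    apply (simp only: fst_conv snd_conv image_mset_add_mset union_mset_add_mset_left image_mset_union renf.simps renf_subst)
    apply (rule deriv.ContrR)
    using h okPD[OF ok h(2)] by (simp_all add: ac_simps)
next
  case (BotR \<Gamma> D \<Delta>)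
  note h = BotR
  show ?case
    apply (simp only: fst_conv snd_conv image_mset_add_mset union_mset_add_mset_left image_mset_union renf.simps renf_subst)
    apply (rule deriv.BotR)
    using h okPD[OF ok h(2)] by (simp_all add: ac_simps)
next
  case (AndL1 B D \<Gamma> \<Delta>)
  note h = AndL1
  show ?case
    apply (simp only: fst_conv snd_conv image_mset_add_mset union_mset_add_mset_left image_mset_union renf.simps renf_subst)
    apply (rule deriv.AndL1)
    using h okPD[OF ok h(2)] by (simp_all add: ac_simps)
next
  case (AndL2 B D \<Gamma> \<Delta>)
  note h = AndL2
  show ?case
    apply (simp only: fst_conv snd_conv image_mset_add_mset union_mset_add_mset_left image_mset_union renf.simps renf_subst)
    apply (rule deriv.AndL2)
    using h okPD[OF ok h(2)] by (simp_all add: ac_simps)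
next
  case (OrL B D \<Gamma> \<Delta>)
  note h = OrL
  show ?case
    apply (simp only: fst_conv snd_conv image_mset_add_mset union_mset_add_mset_left image_mset_union renf.simps renf_subst)
    apply (rule deriv.OrL)
    using h okPD[OF ok h(2)] by (simp_all add: ac_simps)
next
  case (AndR \<Gamma> B D \<Delta>)
  note h = AndR
  show ?case
    apply (simp only: fst_conv snd_conv image_mset_add_mset union_mset_add_mset_left image_mset_union renf.simps renf_subst)
    apply (rule deriv.AndR)
    using h okPD[OF ok h(2)] by (simp_all add: ac_simps)
next
  case (OrR1 \<Gamma> B D \<Delta>)
  note h = OrR1
  show ?case
    apply (simp only: fst_conv snd_conv image_mset_add_mset union_mset_add_mset_left image_mset_union renf.simps renf_subst)
    apply (rule deriv.OrR1)
    using h okPD[OF ok h(2)] by (simp_all add: ac_simps)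
next
  case (OrR2 \<Gamma> B D \<Delta>)
  note h = OrR2
  show ?case
    apply (simp only: fst_conv snd_conv image_mset_add_mset union_mset_add_mset_left image_mset_union renf.simps renf_subst)
    apply (rule deriv.OrR2)
    using h okPD[OF ok h(2)] by (simp_all add: ac_simps)
next
  case (ImpL B D \<Gamma> \<Delta> \<Theta>)
  note h = ImpL
  show ?case
    apply (simp only: fst_conv snd_conv image_mset_add_mset union_mset_add_mset_left image_mset_union renf.simps renf_subst)
    apply (rule deriv.ImpL)
    using h okPD[OF ok h(2)] by (simp_all add: ac_simps)
next
  case (ImpR \<Gamma> B D \<Delta>)
  note h = ImpR
  show ?case
    apply (simp only: fst_conv snd_conv image_mset_add_mset union_mset_add_mset_left image_mset_union renf.simps renf_subst)
    apply (rule deriv.ImpR)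
    using h okPD[OF ok h(2)] by (simp_all add: ac_simps)
next
  case (AllL B \<Gamma> \<Delta> t)
  note h = AllL
  show ?case
    apply (simp only: fst_conv snd_conv image_mset_add_mset union_mset_add_mset_left image_mset_union renf.simps renf_subst)
    apply (rule deriv.AllL)
    using h okPD[OF ok h(2)] by (simp_all add: ac_simps)
next
  case (ExR \<Gamma> B \<Delta> t)
  note h = ExR
  show ?case
    apply (simp only: fst_conv snd_conv image_mset_add_mset union_mset_add_mset_left image_mset_union renf.simps renf_subst)
    apply (rule deriv.ExR)
    using h okPD[OF ok h(2)] by (simp_all add: ac_simps)
next
  case (ExL B \<Gamma> \<Delta> c)
  let ?C = "(add_mset (Ex (renf \<sigma> B)) (image_mset (renf \<sigma>) \<Gamma> + \<Sigma>), image_mset (renf \<sigma>) \<Delta>)"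
  obtain d where d: "d \<notin> consts_seq ?C" using finite_consts_seq ex_new_if_finite infinite_UNIV_nat by metis
  define \<sigma>' where "\<sigma>' = \<sigma>(c := d)"
  have fr: "c \<notin> consts_fm B" "\<forall>F\<in>#\<Gamma>. c \<notin> consts_fm F" "\<forall>F\<in>#\<Delta>. c \<notin> consts_fm F"
    using ExL(3) by (auto simp: consts_seq_def)
  have e1: "renf \<sigma>' B = renf \<sigma> B" using fr unfolding \<sigma>'_def by (intro renf_cong) auto
  have e2: "image_mset (renf \<sigma>') \<Gamma> = image_mset (renf \<sigma>) \<Gamma>"
    using fr unfolding \<sigma>'_def by (intro image_mset_cong renf_cong) auto
  have e3: "image_mset (renf \<sigma>') \<Delta> = image_mset (renf \<sigma>) \<Delta>"
    using fr unfolding \<sigma>'_def by (intro image_mset_cong renf_cong) auto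
  have "deriv R P (image_mset (renf \<sigma>') (fst (add_mset (inst B (Fun c [])) \<Gamma>, \<Delta>)) + \<Sigma>,
     image_mset (renf \<sigma>') (snd (add_mset (inst B (Fun c [])) \<Gamma>, \<Delta>)))" by (rule ExL.IH)
  hence "deriv R P (add_mset (inst (renf \<sigma> B) (Fun d [])) (image_mset (renf \<sigma>) \<Gamma> + \<Sigma>), image_mset (renf \<sigma>) \<Delta>)"
    using e1 e2 e3 by (simp add: \<sigma>'_def)
  moreover have "P ?C" using ExL(2) ok unfolding okP_def by (metis size_image_mset snd_conv)
  ultimately show ?case using ExL(1) d by (auto intro: deriv.ExL)
next
  case (AllR \<Gamma> B \<Delta> c)
  let ?C = "(image_mset (renf \<sigma>) \<Gamma> + \<Sigma>, add_mset (All (renf \<sigma> B)) (image_mset (renf \<sigma>) \<Delta>))"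
  obtain d where d: "d \<notin> consts_seq ?C" using finite_consts_seq ex_new_if_finite infinite_UNIV_nat by metis
  define \<sigma>' where "\<sigma>' = \<sigma>(c := d)"
  have fr: "c \<notin> consts_fm B" "\<forall>F\<in>#\<Gamma>. c \<notin> consts_fm F" "\<forall>F\<in>#\<Delta>. c \<notin> consts_fm F"
    using AllR(3) by (auto simp: consts_seq_def)
  have e1: "renf \<sigma>' B = renf \<sigma> B" using fr unfolding \<sigma>'_def by (intro renf_cong) auto
  have e2: "image_mset (renf \<sigma>') \<Gamma> = image_mset (renf \<sigma>) \<Gamma>"
    using fr unfolding \<sigma>'_def by (intro image_mset_cong renf_cong) auto
  have e3: "image_mset (renf \<sigma>') \<Delta> = image_mset (renf \<sigma>) \<Delta>"
    using fr unfolding \<sigma>'_def by (intro image_mset_cong renf_cong) auto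
  have "deriv R P (image_mset (renf \<sigma>') (fst (\<Gamma>, add_mset (inst B (Fun c [])) \<Delta>)) + \<Sigma>,
     image_mset (renf \<sigma>') (snd (\<Gamma>, add_mset (inst B (Fun c [])) \<Delta>)))" by (rule AllR.IH)
  hence "deriv R P (image_mset (renf \<sigma>) \<Gamma> + \<Sigma>, add_mset (inst (renf \<sigma> B) (Fun d [])) (image_mset (renf \<sigma>) \<Delta>))"
    using e1 e2 e3 by (simp add: \<sigma>'_def)
  moreover have "P ?C" using AllR(2) ok unfolding okP_def by (metis size_image_mset snd_conv size_add_mset)
  ultimately show ?case using AllR(1) d by (auto intro: deriv.AllR)
qed



lemma renf_id_fun[simp]: "renf (\<lambda>x. x) = (\<lambda>A. A)" by (rule ext) simp

lemma weaken: "deriv R P (\<Gamma>, \<Delta>) \<Longrightarrow> okP P \<Longrightarrow> deriv R P (\<Gamma> + \<Sigma>, \<Delta>)"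
  using deriv_ren[of R P "(\<Gamma>, \<Delta>)" "\<lambda>x. x" \<Sigma>] by simp

lemma swap:
  assumes "deriv R P (\<Gamma>, \<Delta>0 + replicate_mset n (inst B (Fun e [])))" "okP P"
    "e \<notin> consts_seq (\<Gamma>, \<Delta>0 + replicate_mset n (All B))"
  shows "deriv R P (\<Gamma>, \<Delta>0 + replicate_mset n (inst B (Fun c [])))"
proof (cases "n = 0")
  case True
  then show ?thesis using assms(1) by simp
next
  case False
  define \<sigma> where "\<sigma> = (\<lambda>x::nat. x)(e := c)"
  have fr: "e \<notin> consts_fm B" "\<forall>F\<in>#\<Gamma>. e \<notin> consts_fm F" "\<forall>F\<in>#\<Delta>0. e \<notin> consts_fm F"
    using assms(3) False by (auto simp: consts_seq_def)
  have e1: "renf \<sigma> B = B" using fr unfolding \<sigma>_def by (intro renf_fix) auto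
  have e2: "image_mset (renf \<sigma>) \<Gamma> = \<Gamma>"
    using fr unfolding \<sigma>_def by (subst image_mset_cong[where g="\<lambda>x. x"]) (auto intro!: renf_fix)
  have e3: "image_mset (renf \<sigma>) \<Delta>0 = \<Delta>0"
    using fr unfolding \<sigma>_def by (subst image_mset_cong[where g="\<lambda>x. x"]) (auto intro!: renf_fix)
  show ?thesis using deriv_ren[OF assms(1) assms(2), of \<sigma> "{#}"] e1 e2 e3 by (simp add: \<sigma>_def)
qed

lemma contrL_many: "deriv R P (replicate_mset (Suc n) X + \<Gamma>, \<Delta>) \<Longrightarrow> ContrL \<in> R \<Longrightarrow> okP P
  \<Longrightarrow> deriv R P (add_mset X \<Gamma>, \<Delta>)"
proof (induction n)
  case 0 then show ?case by simp
next
  case (Suc n)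
  have "P (add_mset X (replicate_mset n X + \<Gamma>), \<Delta>)"
    using Suc.prems(1) Suc.prems(3) deriv.cases okPD by (smt (verit, best) snd_conv)
  then have "deriv R P (replicate_mset (Suc n) X + \<Gamma>, \<Delta>)"
    using Suc.prems by (auto intro: deriv.ContrL)
  then show ?case using Suc by simp
qed

lemma msplit:
  assumes "add_mset B \<Delta>' = \<Delta>0 + replicate_mset n A"
  shows "(\<exists>\<Delta>0'. \<Delta>0 = add_mset B \<Delta>0' \<and> \<Delta>' = \<Delta>0' + replicate_mset n A) \<or>
         (B = A \<and> n > 0 \<and> \<Delta>' = \<Delta>0 + replicate_mset (n - 1) A)"
proof (cases "B \<in># \<Delta>0")
  case True
  then obtain \<Delta>0' where "\<Delta>0 = add_mset B \<Delta>0'" by (meson multi_member_split)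
  then show ?thesis using assms by auto
next
  case False
  then have "B \<in># replicate_mset n A" using assms by (metis union_iff union_single_eq_member)
  then have "B = A" "n > 0" by (auto split: if_splits)
  then show ?thesis using assms by (cases n) auto
qed

abbreviation R0 :: "rule set" where "R0 \<equiv> UNIV - {ImpL, OrR, ExR}"

lemma botI: "I_provable (\<Gamma>, {#Bot#}) \<Longrightarrow> I_provable (\<Gamma>, {#T#})"
  using deriv.BotR[of UNIV "\<lambda>s. size (snd s) = 1" \<Gamma> T "{#}"] by simp

definition simple :: "fm \<Rightarrow> bool" where
  "simple G \<longleftrightarrow> (\<forall>X Y. G \<noteq> And X Y \<and> G \<noteq> Imp X Y) \<and> (\<forall>B. G \<noteq> All B)"

lemma lemA: "deriv R0 (\<lambda>_. True) s \<Longrightarrow> set_mset (snd s) \<subseteq> {G, Bot} \<Longrightarrow> simple G \<Longrightarrow>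
  I_provable (fst s, {# if G \<in># snd s then G else Bot #})"
proof (induction rule: deriv.induct)
  case (Axiom s)
  show ?case
  proof (cases "Top \<in># snd s")
    case True
    then have "G = Top" using Axiom by auto
    then show ?thesis using True by (auto intro!: deriv.Axiom simp: is_axiom_def)
  next
    case False
    then obtain F where F: "F = Bot \<or> is_atom F" "F \<in># fst s" "F \<in># snd s"
      using Axiom(2) by (auto simp: is_axiom_def)
    then have "F = G \<or> F = Bot" using Axiom by auto
    then show ?thesis
    proof
      assume "F = G" then show ?thesis using F by (auto intro!: deriv.Axiom simp: is_axiom_def)
    next
      assume "F = Bot"
      then have "I_provable (fst s, {#Bot#})" using F by (auto intro!: deriv.Axiom simp: is_axiom_def)
      then show ?thesis by (rule botI)
    qed
  qed
next
  case (ContrL B \<Gamma> \<Delta>)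
  then show ?case by (auto intro: deriv.ContrL)
next
  case (ContrR \<Gamma> B \<Delta>)
  then show ?case by auto
next
  case (BotR \<Gamma> D \<Delta>)
  then have "I_provable (\<Gamma>, {#if G \<in># add_mset Bot \<Delta> then G else Bot#})" by auto
  moreover have "(if G \<in># add_mset Bot \<Delta> then G else Bot) = (if G \<in># add_mset D \<Delta> then G else Bot)
     \<or> (if G \<in># add_mset Bot \<Delta> then G else Bot) = Bot" using BotR.prems by auto
  ultimately show ?case using botI by fastforce
next
  case (AndL1 B D \<Gamma> \<Delta>)
  then show ?case by (auto intro: deriv.AndL1)
next
  case (AndL2 B D \<Gamma> \<Delta>)
  then show ?case by (auto intro: deriv.AndL2)
next
  case (OrL B D \<Gamma> \<Delta>)
  then show ?case by (auto intro: deriv.OrL)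
next
  case (AndR \<Gamma> B D \<Delta>)
  then show ?case by (auto simp: simple_def)
next
  case (OrR1 \<Gamma> B D \<Delta>)
  then show ?case by auto
next
  case (OrR2 \<Gamma> B D \<Delta>)
  then show ?case by auto
next
  case (ImpL B D \<Gamma> \<Delta> \<Theta>)
  then show ?case by auto
next
  case (ImpR \<Gamma> B D \<Delta>)
  then show ?case by (auto simp: simple_def)
next
  case (AllL B \<Gamma> \<Delta> t)
  then show ?case by (auto intro: deriv.AllL)
next
  case (ExR \<Gamma> B \<Delta> t)
  then show ?case by auto
next
  case (ExL B \<Gamma> \<Delta> c)
  have "c \<notin> consts_seq (add_mset (Ex B) \<Gamma>, {#if G \<in># \<Delta> then G else Bot#})"
    using ExL(3) by (auto simp: consts_seq_def)
  then show ?case using ExL by (auto intro: deriv.ExL)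
next
  case (AllR \<Gamma> B \<Delta> c)
  then show ?case by (auto simp: simple_def)
qed



abbreviation cd :: "sequent \<Rightarrow> bool" where "cd \<equiv> deriv R0 (\<lambda>_. True)"

lemma cs_repl: "consts_fm X \<subseteq> consts_fm A \<Longrightarrow>
  consts_seq (\<Gamma>, M + replicate_mset n X) \<subseteq> consts_seq (\<Gamma>, M + replicate_mset n A)"
  by (auto simp: consts_seq_def)

lemma ax_keep: "is_axiom (\<Gamma>, \<Delta>0 + M) \<Longrightarrow> (\<forall>F\<in>#M. F \<noteq> Top \<and> F \<noteq> Bot \<and> \<not> is_atom F)
  \<Longrightarrow> is_axiom (\<Gamma>, \<Delta>0 + M')"
  unfolding is_axiom_def by auto

lemma andInv:
  assumes "cd s" "Z = X \<or> Z = Y"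
  shows "\<forall>\<Gamma> \<Delta>0 n. s = (\<Gamma>, \<Delta>0 + replicate_mset n (And X Y)) \<longrightarrow> cd (\<Gamma>, \<Delta>0 + replicate_mset n Z)"
  using assms(1)
proof (induction rule: deriv.induct)
  case (Axiom s)
  then show ?case by (auto intro!: deriv.Axiom elim!: ax_keep simp: is_atom_def split: if_splits)
next
  case (ContrL B \<Gamma> \<Delta>)
  then show ?case by (auto intro: deriv.ContrL)
next
  case (ContrR \<Gamma>' B \<Delta>')
  show ?case
  proof (intro allI impI)
    fix \<Gamma> \<Delta>0 n assume eq: "(\<Gamma>', add_mset B \<Delta>') = (\<Gamma>, \<Delta>0 + replicate_mset n (And X Y))"
    from eq have eqs: "\<Gamma>' = \<Gamma>" "add_mset B \<Delta>' = \<Delta>0 + replicate_mset n (And X Y)" by auto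
    from msplit[OF eqs(2)] show "cd (\<Gamma>, \<Delta>0 + replicate_mset n Z)"
    proof (elim disjE exE conjE)
      fix \<Delta>0' assume a: "\<Delta>0 = add_mset B \<Delta>0'" "\<Delta>' = \<Delta>0' + replicate_mset n (And X Y)"
      have "cd (\<Gamma>, add_mset B (add_mset B \<Delta>0') + replicate_mset n Z)"
        using ContrR.IH[rule_format, of \<Gamma> "add_mset B (add_mset B \<Delta>0')" n] eq a by auto
      then show ?thesis using a by (auto intro: deriv.ContrR)
    next
      assume a: "B = And X Y" "n > 0" "\<Delta>' = \<Delta>0 + replicate_mset (n - 1) (And X Y)"
      have "cd (\<Gamma>, \<Delta>0 + replicate_mset (Suc n) Z)"
        using ContrR.IH[rule_format, of \<Gamma> \<Delta>0 "Suc n"] eq a by (cases n) auto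
      then show ?thesis using a by (cases n) (auto intro: deriv.ContrR)
    qed
  qed
next
  case (BotR \<Gamma>' D \<Delta>')
  show ?case
  proof (intro allI impI)
    fix \<Gamma> \<Delta>0 n assume eq: "(\<Gamma>', add_mset D \<Delta>') = (\<Gamma>, \<Delta>0 + replicate_mset n (And X Y))"
    from eq have eqs: "\<Gamma>' = \<Gamma>" "add_mset D \<Delta>' = \<Delta>0 + replicate_mset n (And X Y)" by auto
    from msplit[OF eqs(2)] show "cd (\<Gamma>, \<Delta>0 + replicate_mset n Z)"
    proof (elim disjE exE conjE)
      fix \<Delta>0' assume a: "\<Delta>0 = add_mset D \<Delta>0'" "\<Delta>' = \<Delta>0' + replicate_mset n (And X Y)"
      have "cd (\<Gamma>, add_mset Bot \<Delta>0' + replicate_mset n Z)"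
        using BotR.IH[rule_format, of \<Gamma> "add_mset Bot \<Delta>0'" n] eq a by auto
      then show ?thesis using a by (auto intro: deriv.BotR)
    next
      assume a: "D = And X Y" "n > 0" "\<Delta>' = \<Delta>0 + replicate_mset (n - 1) (And X Y)"
      have "cd (\<Gamma>, add_mset Bot \<Delta>0 + replicate_mset (n - 1) Z)"
        using BotR.IH[rule_format, of \<Gamma> "add_mset Bot \<Delta>0" "n - 1"] eq a by auto
      then show ?thesis using a by (cases n) (auto intro: deriv.BotR)
    qed
  qed
next
  case (AndL1 B D \<Gamma> \<Delta>)
  then show ?case by (auto intro: deriv.AndL1)
next
  case (AndL2 B D \<Gamma> \<Delta>)
  then show ?case by (auto intro: deriv.AndL2)
next
  case (OrL B D \<Gamma> \<Delta>)
  then show ?case by (auto intro: deriv.OrL)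
next
  case (AndR \<Gamma>' B D \<Delta>')
  show ?case
  proof (intro allI impI)
    fix \<Gamma> \<Delta>0 n assume eq: "(\<Gamma>', add_mset (And B D) \<Delta>') = (\<Gamma>, \<Delta>0 + replicate_mset n (And X Y))"
    from eq have eqs: "\<Gamma>' = \<Gamma>" "add_mset (And B D) \<Delta>' = \<Delta>0 + replicate_mset n (And X Y)" by auto
    from msplit[OF eqs(2)] show "cd (\<Gamma>, \<Delta>0 + replicate_mset n Z)"
    proof (elim disjE exE conjE)
      fix \<Delta>0' assume a: "\<Delta>0 = add_mset (And B D) \<Delta>0'" "\<Delta>' = \<Delta>0' + replicate_mset n (And X Y)"
      have "cd (\<Gamma>, add_mset B \<Delta>0' + replicate_mset n Z)" "cd (\<Gamma>, add_mset D \<Delta>0' + replicate_mset n Z)"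
        using AndR.IH(1)[rule_format, of \<Gamma> "add_mset B \<Delta>0'" n] AndR.IH(2)[rule_format, of \<Gamma> "add_mset D \<Delta>0'" n] eq a by auto
      then show ?thesis using a by (auto intro: deriv.AndR)
    next
      assume a: "And B D = And X Y" "n > 0" "\<Delta>' = \<Delta>0 + replicate_mset (n - 1) (And X Y)"
      have "cd (\<Gamma>, add_mset B \<Delta>0 + replicate_mset (n - 1) Z)" "cd (\<Gamma>, add_mset D \<Delta>0 + replicate_mset (n - 1) Z)"
        using AndR.IH(1)[rule_format, of \<Gamma> "add_mset B \<Delta>0" "n - 1"]
          AndR.IH(2)[rule_format, of \<Gamma> "add_mset D \<Delta>0" "n - 1"] eq a by auto
      then show ?thesis using a assms(2) by (cases n) auto
    qed
  qed
next
  case (OrR1 \<Gamma> B D \<Delta>)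
  then show ?case by auto
next
  case (OrR2 \<Gamma> B D \<Delta>)
  then show ?case by auto
next
  case (ImpL B D \<Gamma> \<Delta> \<Theta>)
  then show ?case by auto
next
  case (ImpR \<Gamma>' B D \<Delta>')
  show ?case
  proof (intro allI impI)
    fix \<Gamma> \<Delta>0 n assume eq: "(\<Gamma>', add_mset (Imp B D) \<Delta>') = (\<Gamma>, \<Delta>0 + replicate_mset n (And X Y))"
    from eq have eqs: "\<Gamma>' = \<Gamma>" "add_mset (Imp B D) \<Delta>' = \<Delta>0 + replicate_mset n (And X Y)" by auto
    from msplit[OF eqs(2)] show "cd (\<Gamma>, \<Delta>0 + replicate_mset n Z)"
    proof (elim disjE exE conjE)
      fix \<Delta>0' assume a: "\<Delta>0 = add_mset (Imp B D) \<Delta>0'" "\<Delta>' = \<Delta>0' + replicate_mset n (And X Y)"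
      have "cd (add_mset B \<Gamma>, add_mset D \<Delta>0' + replicate_mset n Z)"
        using ImpR.IH[rule_format, of "add_mset B \<Gamma>" "add_mset D \<Delta>0'" n] eq a by auto
      then show ?thesis using a by (auto intro: deriv.ImpR)
    qed auto
  qed
next
  case (AllL B \<Gamma> \<Delta> t)
  then show ?case by (auto intro: deriv.AllL)
next
  case (ExR \<Gamma> B \<Delta> t)
  then show ?case by auto
next
  case (ExL B \<Gamma>' \<Delta> c)
  show ?case
  proof (intro allI impI)
    fix \<Gamma> \<Delta>0 n assume eq: "(add_mset (Ex B) \<Gamma>', \<Delta>) = (\<Gamma>, \<Delta>0 + replicate_mset n (And X Y))"
    have "cd (add_mset (inst B (Fun c [])) \<Gamma>', \<Delta>0 + replicate_mset n Z)"
      using ExL.IH eq by auto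
    moreover have "c \<notin> consts_seq (add_mset (Ex B) \<Gamma>', \<Delta>0 + replicate_mset n Z)"
      using ExL(3) eq cs_repl[of Z "And X Y" "add_mset (Ex B) \<Gamma>'" \<Delta>0 n] assms(2) by auto
    ultimately show "cd (\<Gamma>, \<Delta>0 + replicate_mset n Z)" using eq ExL(1) by (auto intro: deriv.ExL)
  qed
next
  case (AllR \<Gamma>' B \<Delta>' c)
  show ?case
  proof (intro allI impI)
    fix \<Gamma> \<Delta>0 n assume eq: "(\<Gamma>', add_mset (All B) \<Delta>') = (\<Gamma>, \<Delta>0 + replicate_mset n (And X Y))"
    from eq have eqs: "\<Gamma>' = \<Gamma>" "add_mset (All B) \<Delta>' = \<Delta>0 + replicate_mset n (And X Y)" by auto
    from msplit[OF eqs(2)] show "cd (\<Gamma>, \<Delta>0 + replicate_mset n Z)"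
    proof (elim disjE exE conjE)
      fix \<Delta>0' assume a: "\<Delta>0 = add_mset (All B) \<Delta>0'" "\<Delta>' = \<Delta>0' + replicate_mset n (And X Y)"
      have "cd (\<Gamma>, add_mset (inst B (Fun c [])) \<Delta>0' + replicate_mset n Z)"
        using AllR.IH[rule_format, of \<Gamma> "add_mset (inst B (Fun c [])) \<Delta>0'" n] eq a by auto
      moreover have "c \<notin> consts_seq (\<Gamma>, add_mset (All B) \<Delta>0' + replicate_mset n Z)"
        using AllR(3) eq a cs_repl[of Z "And X Y" \<Gamma> "add_mset (All B) \<Delta>0'" n] assms(2) by auto
      ultimately show ?thesis using a AllR(1) by (auto intro: deriv.AllR)
    qed auto
  qed
qed



lemma ax_keep2: "is_axiom (\<Gamma>, \<Delta>0 + M) \<Longrightarrow> (\<forall>F\<in>#M. F \<noteq> Top \<and> F \<noteq> Bot \<and> \<not> is_atom F)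
  \<Longrightarrow> is_axiom (\<Gamma>' + \<Gamma>, \<Delta>0 + M')"
  unfolding is_axiom_def by auto

lemma cs_imp: "consts_seq (replicate_mset n X + \<Gamma>, M + replicate_mset n Y) \<subseteq> consts_seq (\<Gamma>, M + replicate_mset n (Imp X Y))"
  by (auto simp: consts_seq_def)

lemma impInv:
  assumes "cd s"
  shows "\<forall>\<Gamma> \<Delta>0 n. s = (\<Gamma>, \<Delta>0 + replicate_mset n (Imp X Y)) \<longrightarrow>
     cd (replicate_mset n X + \<Gamma>, \<Delta>0 + replicate_mset n Y)"
  using assms(1)
proof (induction rule: deriv.induct)
  case (Axiom s)
  then show ?case by (auto intro!: deriv.Axiom elim!: ax_keep2 simp: is_atom_def split: if_splits)
next
  case (ContrL B \<Gamma> \<Delta>)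
  then show ?case by (auto intro: deriv.ContrL)
next
  case (ContrR \<Gamma>' B \<Delta>')
  show ?case
  proof (intro allI impI)
    fix \<Gamma> \<Delta>0 n assume eq: "(\<Gamma>', add_mset B \<Delta>') = (\<Gamma>, \<Delta>0 + replicate_mset n (Imp X Y))"
    from eq have eqs: "\<Gamma>' = \<Gamma>" "add_mset B \<Delta>' = \<Delta>0 + replicate_mset n (Imp X Y)" by auto
    from msplit[OF eqs(2)] show "cd (replicate_mset n X + \<Gamma>, \<Delta>0 + replicate_mset n Y)"
    proof (elim disjE exE conjE)
      fix \<Delta>0' assume a: "\<Delta>0 = add_mset B \<Delta>0'" "\<Delta>' = \<Delta>0' + replicate_mset n (Imp X Y)"
      have "cd (replicate_mset n X + \<Gamma>, add_mset B (add_mset B \<Delta>0') + replicate_mset n Y)"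
        using ContrR.IH[rule_format, of \<Gamma> "add_mset B (add_mset B \<Delta>0')" n] eq a by auto
      then show ?thesis using a by (auto intro: deriv.ContrR)
    next
      assume a: "B = Imp X Y" "n > 0" "\<Delta>' = \<Delta>0 + replicate_mset (n - 1) (Imp X Y)"
      have "cd (replicate_mset (Suc n) X + \<Gamma>, \<Delta>0 + replicate_mset (Suc n) Y)"
        using ContrR.IH[rule_format, of \<Gamma> \<Delta>0 "Suc n"] eq a by (cases n) auto
      then have "cd (replicate_mset (Suc n) X + \<Gamma>, \<Delta>0 + replicate_mset n Y)"
        using a by (cases n) (auto intro: deriv.ContrR)
      moreover obtain m where m: "n = Suc m" using a(2) by (cases n) auto
      ultimately have "cd (add_mset X (add_mset X (replicate_mset m X + \<Gamma>)), \<Delta>0 + replicate_mset n Y)" by simp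
      then have "cd (add_mset X (replicate_mset m X + \<Gamma>), \<Delta>0 + replicate_mset n Y)"
        by (rule deriv.ContrL[rotated 2]) simp_all
      then show ?thesis using m by simp
    qed
  qed
next
  case (BotR \<Gamma>' D \<Delta>')
  show ?case
  proof (intro allI impI)
    fix \<Gamma> \<Delta>0 n assume eq: "(\<Gamma>', add_mset D \<Delta>') = (\<Gamma>, \<Delta>0 + replicate_mset n (Imp X Y))"
    from eq have eqs: "\<Gamma>' = \<Gamma>" "add_mset D \<Delta>' = \<Delta>0 + replicate_mset n (Imp X Y)" by auto
    from msplit[OF eqs(2)] show "cd (replicate_mset n X + \<Gamma>, \<Delta>0 + replicate_mset n Y)"
    proof (elim disjE exE conjE)
      fix \<Delta>0' assume a: "\<Delta>0 = add_mset D \<Delta>0'" "\<Delta>' = \<Delta>0' + replicate_mset n (Imp X Y)"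
      have "cd (replicate_mset n X + \<Gamma>, add_mset Bot \<Delta>0' + replicate_mset n Y)"
        using BotR.IH[rule_format, of \<Gamma> "add_mset Bot \<Delta>0'" n] eq a by auto
      then show ?thesis using a by (auto intro: deriv.BotR)
    next
      assume a: "D = Imp X Y" "n > 0" "\<Delta>' = \<Delta>0 + replicate_mset (n - 1) (Imp X Y)"
      have "cd (replicate_mset (n - 1) X + \<Gamma>, add_mset Bot \<Delta>0 + replicate_mset (n - 1) Y)"
        using BotR.IH[rule_format, of \<Gamma> "add_mset Bot \<Delta>0" "n - 1"] eq a by auto
      then have "cd (replicate_mset (n - 1) X + \<Gamma>, add_mset Y (\<Delta>0 + replicate_mset (n - 1) Y))"
        by (auto intro: deriv.BotR)
      then have "cd (replicate_mset (n - 1) X + \<Gamma> + {#X#}, add_mset Y (\<Delta>0 + replicate_mset (n - 1) Y))"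
        by (rule weaken) simp
      then show ?thesis using a by (cases n) (auto simp: ac_simps)
    qed
  qed
next
  case (AndL1 B D \<Gamma> \<Delta>)
  then show ?case by (auto intro: deriv.AndL1)
next
  case (AndL2 B D \<Gamma> \<Delta>)
  then show ?case by (auto intro: deriv.AndL2)
next
  case (OrL B D \<Gamma> \<Delta>)
  then show ?case by (auto intro: deriv.OrL)
next
  case (AndR \<Gamma>' B D \<Delta>')
  show ?case
  proof (intro allI impI)
    fix \<Gamma> \<Delta>0 n assume eq: "(\<Gamma>', add_mset (And B D) \<Delta>') = (\<Gamma>, \<Delta>0 + replicate_mset n (Imp X Y))"
    from eq have eqs: "\<Gamma>' = \<Gamma>" "add_mset (And B D) \<Delta>' = \<Delta>0 + replicate_mset n (Imp X Y)" by auto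
    from msplit[OF eqs(2)] show "cd (replicate_mset n X + \<Gamma>, \<Delta>0 + replicate_mset n Y)"
    proof (elim disjE exE conjE)
      fix \<Delta>0' assume a: "\<Delta>0 = add_mset (And B D) \<Delta>0'" "\<Delta>' = \<Delta>0' + replicate_mset n (Imp X Y)"
      have "cd (replicate_mset n X + \<Gamma>, add_mset B \<Delta>0' + replicate_mset n Y)" "cd (replicate_mset n X + \<Gamma>, add_mset D \<Delta>0' + replicate_mset n Y)"
        using AndR.IH(1)[rule_format, of \<Gamma> "add_mset B \<Delta>0'" n] AndR.IH(2)[rule_format, of \<Gamma> "add_mset D \<Delta>0'" n] eq a by auto
      then show ?thesis using a by (auto intro: deriv.AndR)
    qed auto
  qed
next
  case (OrR1 \<Gamma> B D \<Delta>)
  then show ?case by auto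
next
  case (OrR2 \<Gamma> B D \<Delta>)
  then show ?case by auto
next
  case (ImpL B D \<Gamma> \<Delta> \<Theta>)
  then show ?case by auto
next
  case (ImpR \<Gamma>' B D \<Delta>')
  show ?case
  proof (intro allI impI)
    fix \<Gamma> \<Delta>0 n assume eq: "(\<Gamma>', add_mset (Imp B D) \<Delta>') = (\<Gamma>, \<Delta>0 + replicate_mset n (Imp X Y))"
    from eq have eqs: "\<Gamma>' = \<Gamma>" "add_mset (Imp B D) \<Delta>' = \<Delta>0 + replicate_mset n (Imp X Y)" by auto
    from msplit[OF eqs(2)] show "cd (replicate_mset n X + \<Gamma>, \<Delta>0 + replicate_mset n Y)"
    proof (elim disjE exE conjE)
      fix \<Delta>0' assume a: "\<Delta>0 = add_mset (Imp B D) \<Delta>0'" "\<Delta>' = \<Delta>0' + replicate_mset n (Imp X Y)"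
      have "cd (replicate_mset n X + add_mset B \<Gamma>, add_mset D \<Delta>0' + replicate_mset n Y)"
        using ImpR.IH[rule_format, of "add_mset B \<Gamma>" "add_mset D \<Delta>0'" n] eq a by auto
      then show ?thesis using a by (auto intro: deriv.ImpR)
    next
      assume a: "Imp B D = Imp X Y" "n > 0" "\<Delta>' = \<Delta>0 + replicate_mset (n - 1) (Imp X Y)"
      have "cd (replicate_mset (n - 1) X + add_mset B \<Gamma>, add_mset D \<Delta>0 + replicate_mset (n - 1) Y)"
        using ImpR.IH[rule_format, of "add_mset B \<Gamma>" "add_mset D \<Delta>0" "n - 1"] eq a by auto
      then show ?thesis using a by (cases n) (auto simp: ac_simps)
    qed
  qed
next
  case (AllL B \<Gamma> \<Delta> t)
  then show ?case by (auto intro: deriv.AllL)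
next
  case (ExR \<Gamma> B \<Delta> t)
  then show ?case by auto
next
  case (ExL B \<Gamma>' \<Delta> c)
  show ?case
  proof (intro allI impI)
    fix \<Gamma> \<Delta>0 n assume eq: "(add_mset (Ex B) \<Gamma>', \<Delta>) = (\<Gamma>, \<Delta>0 + replicate_mset n (Imp X Y))"
    have "cd (add_mset (inst B (Fun c [])) (replicate_mset n X + \<Gamma>'), \<Delta>0 + replicate_mset n Y)"
      using ExL.IH[rule_format, of "add_mset (inst B (Fun c [])) \<Gamma>'" \<Delta>0 n] eq by auto
    moreover have "c \<notin> consts_seq (add_mset (Ex B) (replicate_mset n X + \<Gamma>'), \<Delta>0 + replicate_mset n Y)"
      using ExL(3) eq cs_imp[of n X "add_mset (Ex B) \<Gamma>'" \<Delta>0 Y] by auto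
    ultimately show "cd (replicate_mset n X + \<Gamma>, \<Delta>0 + replicate_mset n Y)"
      using eq deriv.ExL[of R0 "\<lambda>_. True" B "replicate_mset n X + \<Gamma>'" "\<Delta>0 + replicate_mset n Y" c] by auto
  qed
next
  case (AllR \<Gamma>' B \<Delta>' c)
  show ?case
  proof (intro allI impI)
    fix \<Gamma> \<Delta>0 n assume eq: "(\<Gamma>', add_mset (All B) \<Delta>') = (\<Gamma>, \<Delta>0 + replicate_mset n (Imp X Y))"
    from eq have eqs: "\<Gamma>' = \<Gamma>" "add_mset (All B) \<Delta>' = \<Delta>0 + replicate_mset n (Imp X Y)" by auto
    from msplit[OF eqs(2)] show "cd (replicate_mset n X + \<Gamma>, \<Delta>0 + replicate_mset n Y)"
    proof (elim disjE exE conjE)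
      fix \<Delta>0' assume a: "\<Delta>0 = add_mset (All B) \<Delta>0'" "\<Delta>' = \<Delta>0' + replicate_mset n (Imp X Y)"
      have "cd (replicate_mset n X + \<Gamma>, add_mset (inst B (Fun c [])) \<Delta>0' + replicate_mset n Y)"
        using AllR.IH[rule_format, of \<Gamma> "add_mset (inst B (Fun c [])) \<Delta>0'" n] eq a by auto
      moreover have "c \<notin> consts_seq (replicate_mset n X + \<Gamma>, add_mset (All B) \<Delta>0' + replicate_mset n Y)"
        using AllR(3) eq a cs_imp[of n X \<Gamma> "add_mset (All B) \<Delta>0'" Y] by auto
      ultimately show ?thesis using a AllR(1) by (auto intro: deriv.AllR)
    qed auto
  qed
qed



lemma cs_all: "consts_seq (\<Gamma>, M + replicate_mset n (inst B (Fun e []))) \<subseteq> consts_seq (\<Gamma>, M + replicate_mset n (All B)) \<union> {e}"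
  using consts_subst[of B "Fun e []" 0] by (auto simp: consts_seq_def)

lemma fresh_ex: "finite (S::nat set) \<Longrightarrow> \<exists>e. e \<notin> S"
  using ex_new_if_finite infinite_UNIV_nat by blast

lemma allInv:
  assumes "cd s"
  shows "\<forall>\<Gamma> \<Delta>0 n c. s = (\<Gamma>, \<Delta>0 + replicate_mset n (All B)) \<longrightarrow>
     cd (\<Gamma>, \<Delta>0 + replicate_mset n (inst B (Fun c [])))"
  using assms(1)
proof (induction rule: deriv.induct)
  case (Axiom s)
  then show ?case by (auto intro!: deriv.Axiom elim!: ax_keep simp: is_atom_def split: if_splits)
next
  case (ContrL B \<Gamma> \<Delta>)
  then show ?case by (auto intro: deriv.ContrL)
next
  case (ContrR \<Gamma>' B' \<Delta>')
  show ?case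
  proof (intro allI impI)
    fix \<Gamma> \<Delta>0 n c assume eq: "(\<Gamma>', add_mset B' \<Delta>') = (\<Gamma>, \<Delta>0 + replicate_mset n (All B))"
    from eq have eqs: "\<Gamma>' = \<Gamma>" "add_mset B' \<Delta>' = \<Delta>0 + replicate_mset n (All B)" by auto
    from msplit[OF eqs(2)] show "cd (\<Gamma>, \<Delta>0 + replicate_mset n (inst B (Fun c [])))"
    proof (elim disjE exE conjE)
      fix \<Delta>0' assume a: "\<Delta>0 = add_mset B' \<Delta>0'" "\<Delta>' = \<Delta>0' + replicate_mset n (All B)"
      have "cd (\<Gamma>, add_mset B' (add_mset B' \<Delta>0') + replicate_mset n (inst B (Fun c [])))"
        using ContrR.IH[rule_format, of \<Gamma> "add_mset B' (add_mset B' \<Delta>0')" n c] eq a by auto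
      then show ?thesis using a by (auto intro: deriv.ContrR)
    next
      assume a: "B' = All B" "n > 0" "\<Delta>' = \<Delta>0 + replicate_mset (n - 1) (All B)"
      have "cd (\<Gamma>, \<Delta>0 + replicate_mset (Suc n) (inst B (Fun c [])))"
        using ContrR.IH[rule_format, of \<Gamma> \<Delta>0 "Suc n" c] eq a by (cases n) auto
      then show ?thesis using a by (cases n) (auto intro: deriv.ContrR)
    qed
  qed
next
  case (BotR \<Gamma>' D \<Delta>')
  show ?case
  proof (intro allI impI)
    fix \<Gamma> \<Delta>0 n c assume eq: "(\<Gamma>', add_mset D \<Delta>') = (\<Gamma>, \<Delta>0 + replicate_mset n (All B))"
    from eq have eqs: "\<Gamma>' = \<Gamma>" "add_mset D \<Delta>' = \<Delta>0 + replicate_mset n (All B)" by auto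
    from msplit[OF eqs(2)] show "cd (\<Gamma>, \<Delta>0 + replicate_mset n (inst B (Fun c [])))"
    proof (elim disjE exE conjE)
      fix \<Delta>0' assume a: "\<Delta>0 = add_mset D \<Delta>0'" "\<Delta>' = \<Delta>0' + replicate_mset n (All B)"
      have "cd (\<Gamma>, add_mset Bot \<Delta>0' + replicate_mset n (inst B (Fun c [])))"
        using BotR.IH[rule_format, of \<Gamma> "add_mset Bot \<Delta>0'" n c] eq a by auto
      then show ?thesis using a by (auto intro: deriv.BotR)
    next
      assume a: "D = All B" "n > 0" "\<Delta>' = \<Delta>0 + replicate_mset (n - 1) (All B)"
      have "cd (\<Gamma>, add_mset Bot \<Delta>0 + replicate_mset (n - 1) (inst B (Fun c [])))"
        using BotR.IH[rule_format, of \<Gamma> "add_mset Bot \<Delta>0" "n - 1" c] eq a by auto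
      then show ?thesis using a by (cases n) (auto intro: deriv.BotR)
    qed
  qed
next
  case (AndL1 B D \<Gamma> \<Delta>)
  then show ?case by (auto intro: deriv.AndL1)
next
  case (AndL2 B D \<Gamma> \<Delta>)
  then show ?case by (auto intro: deriv.AndL2)
next
  case (OrL B D \<Gamma> \<Delta>)
  then show ?case by (auto intro: deriv.OrL)
next
  case (AndR \<Gamma>' B' D \<Delta>')
  show ?case
  proof (intro allI impI)
    fix \<Gamma> \<Delta>0 n c assume eq: "(\<Gamma>', add_mset (And B' D) \<Delta>') = (\<Gamma>, \<Delta>0 + replicate_mset n (All B))"
    from eq have eqs: "\<Gamma>' = \<Gamma>" "add_mset (And B' D) \<Delta>' = \<Delta>0 + replicate_mset n (All B)" by auto
    from msplit[OF eqs(2)] show "cd (\<Gamma>, \<Delta>0 + replicate_mset n (inst B (Fun c [])))"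
    proof (elim disjE exE conjE)
      fix \<Delta>0' assume a: "\<Delta>0 = add_mset (And B' D) \<Delta>0'" "\<Delta>' = \<Delta>0' + replicate_mset n (All B)"
      have "cd (\<Gamma>, add_mset B' \<Delta>0' + replicate_mset n (inst B (Fun c [])))" "cd (\<Gamma>, add_mset D \<Delta>0' + replicate_mset n (inst B (Fun c [])))"
        using AndR.IH(1)[rule_format, of \<Gamma> "add_mset B' \<Delta>0'" n c] AndR.IH(2)[rule_format, of \<Gamma> "add_mset D \<Delta>0'" n c] eq a by auto
      then show ?thesis using a by (auto intro: deriv.AndR)
    qed auto
  qed
next
  case (OrR1 \<Gamma> B D \<Delta>)
  then show ?case by auto
next
  case (OrR2 \<Gamma> B D \<Delta>)
  then show ?case by auto
next
  case (ImpL B D \<Gamma> \<Delta> \<Theta>)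
  then show ?case by auto
next
  case (ImpR \<Gamma>' B' D \<Delta>')
  show ?case
  proof (intro allI impI)
    fix \<Gamma> \<Delta>0 n c assume eq: "(\<Gamma>', add_mset (Imp B' D) \<Delta>') = (\<Gamma>, \<Delta>0 + replicate_mset n (All B))"
    from eq have eqs: "\<Gamma>' = \<Gamma>" "add_mset (Imp B' D) \<Delta>' = \<Delta>0 + replicate_mset n (All B)" by auto
    from msplit[OF eqs(2)] show "cd (\<Gamma>, \<Delta>0 + replicate_mset n (inst B (Fun c [])))"
    proof (elim disjE exE conjE)
      fix \<Delta>0' assume a: "\<Delta>0 = add_mset (Imp B' D) \<Delta>0'" "\<Delta>' = \<Delta>0' + replicate_mset n (All B)"
      have "cd (add_mset B' \<Gamma>, add_mset D \<Delta>0' + replicate_mset n (inst B (Fun c [])))"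
        using ImpR.IH[rule_format, of "add_mset B' \<Gamma>" "add_mset D \<Delta>0'" n c] eq a by auto
      then show ?thesis using a by (auto intro: deriv.ImpR)
    qed auto
  qed
next
  case (AllL B \<Gamma> \<Delta> t)
  then show ?case by (auto intro: deriv.AllL)
next
  case (ExR \<Gamma> B \<Delta> t)
  then show ?case by auto
next
  case (ExL B' \<Gamma>' \<Delta> d)
  show ?case
  proof (intro allI impI)
    fix \<Gamma> \<Delta>0 n c assume eq: "(add_mset (Ex B') \<Gamma>', \<Delta>) = (\<Gamma>, \<Delta>0 + replicate_mset n (All B))"
    obtain e where e: "e \<notin> consts_seq (add_mset (Ex B') \<Gamma>', \<Delta>) \<union> {d}"
      using fresh_ex[of "consts_seq (add_mset (Ex B') \<Gamma>', \<Delta>) \<union> {d}"] by auto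
    have "cd (add_mset (inst B' (Fun d [])) \<Gamma>', \<Delta>0 + replicate_mset n (inst B (Fun e [])))"
      using ExL.IH[rule_format, of "add_mset (inst B' (Fun d [])) \<Gamma>'" \<Delta>0 n e] eq by auto
    moreover have "d \<notin> consts_seq (add_mset (Ex B') \<Gamma>', \<Delta>0 + replicate_mset n (inst B (Fun e [])))"
      using ExL(3) eq e cs_all[of "add_mset (Ex B') \<Gamma>'" \<Delta>0 n B e] by auto
    ultimately have "cd (add_mset (Ex B') \<Gamma>', \<Delta>0 + replicate_mset n (inst B (Fun e [])))"
      using deriv.ExL[of R0 "\<lambda>_. True" B' \<Gamma>' "\<Delta>0 + replicate_mset n (inst B (Fun e []))" d] by auto
    then show "cd (\<Gamma>, \<Delta>0 + replicate_mset n (inst B (Fun c [])))"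
      using swap[of R0 "\<lambda>_. True" "add_mset (Ex B') \<Gamma>'" \<Delta>0 n B e c] e eq by auto
  qed
next
  case (AllR \<Gamma>' B' \<Delta>' d)
  show ?case
  proof (intro allI impI)
    fix \<Gamma> \<Delta>0 n c assume eq: "(\<Gamma>', add_mset (All B') \<Delta>') = (\<Gamma>, \<Delta>0 + replicate_mset n (All B))"
    from eq have eqs: "\<Gamma>' = \<Gamma>" "add_mset (All B') \<Delta>' = \<Delta>0 + replicate_mset n (All B)" by auto
    from msplit[OF eqs(2)] show "cd (\<Gamma>, \<Delta>0 + replicate_mset n (inst B (Fun c [])))"
    proof (elim disjE exE conjE)
      fix \<Delta>0' assume a: "\<Delta>0 = add_mset (All B') \<Delta>0'" "\<Delta>' = \<Delta>0' + replicate_mset n (All B)"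
      obtain e where e: "e \<notin> consts_seq (\<Gamma>', add_mset (All B') \<Delta>') \<union> {d}"
        using fresh_ex[of "consts_seq (\<Gamma>', add_mset (All B') \<Delta>') \<union> {d}"] by auto
      have "cd (\<Gamma>, add_mset (inst B' (Fun d [])) \<Delta>0' + replicate_mset n (inst B (Fun e [])))"
        using AllR.IH[rule_format, of \<Gamma> "add_mset (inst B' (Fun d [])) \<Delta>0'" n e] eq a by auto
      moreover have "d \<notin> consts_seq (\<Gamma>, add_mset (All B') \<Delta>0' + replicate_mset n (inst B (Fun e [])))"
        using AllR(3) eq a e cs_all[of \<Gamma> "add_mset (All B') \<Delta>0'" n B e] by auto
      ultimately have "cd (\<Gamma>, add_mset (All B') \<Delta>0' + replicate_mset n (inst B (Fun e [])))"
        using deriv.AllR[of R0 "\<lambda>_. True" \<Gamma> B' "\<Delta>0' + replicate_mset n (inst B (Fun e []))" d] by auto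
      then show ?thesis
        using swap[of R0 "\<lambda>_. True" \<Gamma> "add_mset (All B') \<Delta>0'" n B e c] e eq a by auto
    next
      assume a: "All B' = All B" "n > 0" "\<Delta>' = \<Delta>0 + replicate_mset (n - 1) (All B)"
      have "cd (\<Gamma>, add_mset (inst B (Fun d [])) \<Delta>0 + replicate_mset (n - 1) (inst B (Fun d [])))"
        using AllR.IH[rule_format, of \<Gamma> "add_mset (inst B (Fun d [])) \<Delta>0" "n - 1" d] eq a by auto
      then have "cd (\<Gamma>, \<Delta>0 + replicate_mset n (inst B (Fun d [])))"
        using a by (cases n) auto
      moreover have "d \<notin> consts_seq (\<Gamma>, \<Delta>0 + replicate_mset n (All B))"
        using AllR(3) eqs by simp
      ultimately show ?thesis using swap[of R0 "\<lambda>_. True" \<Gamma> \<Delta>0 n B d c] by auto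
    qed
  qed
qed



lemma decomp: "\<Delta> = filter_mset (\<lambda>F. F \<noteq> G) \<Delta> + replicate_mset (count \<Delta> G) G"
  by (metis (mono_tags) filter_eq_replicate_mset multiset_partition union_commute)

lemma main: "\<forall>\<Gamma> \<Delta>. cd (\<Gamma>, \<Delta>) \<longrightarrow> set_mset \<Delta> \<subseteq> {G, Bot} \<longrightarrow> I_provable (\<Gamma>, {#G#})"
proof (induction "fsize G" arbitrary: G rule: less_induct)
  case less
  show ?case
  proof (intro allI impI)
    fix \<Gamma> \<Delta> assume d: "cd (\<Gamma>, \<Delta>)" and s: "set_mset \<Delta> \<subseteq> {G, Bot}"
    define \<Delta>0 where "\<Delta>0 = filter_mset (\<lambda>F. F \<noteq> G) \<Delta>"
    define n where "n = count \<Delta> G"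
    have dec: "\<Delta> = \<Delta>0 + replicate_mset n G" unfolding \<Delta>0_def n_def by (rule decomp)
    have s0: "set_mset \<Delta>0 \<subseteq> {Bot}" using s unfolding \<Delta>0_def by auto
    have sZ: "set_mset (\<Delta>0 + replicate_mset n Z) \<subseteq> {Z, Bot}" for Z using s0 by auto
    consider (A) X Y where "G = And X Y" | (I) X Y where "G = Imp X Y" | (L) B where "G = All B"
      | (S) "simple G" unfolding simple_def by blast
    then show "I_provable (\<Gamma>, {#G#})"
    proof cases
      case A
      have "cd (\<Gamma>, \<Delta>0 + replicate_mset n X)" "cd (\<Gamma>, \<Delta>0 + replicate_mset n Y)"
        using andInv[OF d, of X X Y] andInv[OF d, of Y X Y] dec A by auto
      then have "I_provable (\<Gamma>, {#X#})" "I_provable (\<Gamma>, {#Y#})"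
        using less[of X] less[of Y] sZ A by auto
      then show ?thesis using A deriv.AndR[of UNIV "\<lambda>s. size (snd s) = 1" \<Gamma> X Y "{#}"] by simp
    next
      case I
      have "cd (replicate_mset n X + \<Gamma>, \<Delta>0 + replicate_mset n Y)"
        using impInv[OF d, of X Y] dec I by auto
      then have i: "I_provable (replicate_mset n X + \<Gamma>, {#Y#})"
        using less[of Y] sZ I by auto
      have "I_provable (add_mset X \<Gamma>, {#Y#})"
      proof (cases n)
        case 0
        then show ?thesis using weaken[OF i okP_I, of "{#X#}"] by simp
      next
        case (Suc m)
        then show ?thesis using contrL_many[of UNIV _ m X \<Gamma> "{#Y#}", OF _ _ okP_I] i by simp
      qed
      then show ?thesis using I deriv.ImpR[of UNIV "\<lambda>s. size (snd s) = 1" \<Gamma> X Y "{#}"] by simp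
    next
      case L
      obtain c where c: "c \<notin> consts_seq (\<Gamma>, {#All B#})"
        using fresh_ex[of "consts_seq (\<Gamma>, {#All B#})"] by auto
      have "cd (\<Gamma>, \<Delta>0 + replicate_mset n (inst B (Fun c [])))"
        using allInv[OF d, of B] dec L by auto
      then have "I_provable (\<Gamma>, {#inst B (Fun c [])#})"
        using less[of "inst B (Fun c [])"] sZ L by auto
      then show ?thesis using L c deriv.AllR[of UNIV "\<lambda>s. size (snd s) = 1" \<Gamma> B "{#}" c] by simp
    next
      case S
      have "I_provable (\<Gamma>, {#if G \<in># \<Delta> then G else Bot#})" using lemA[of "(\<Gamma>, \<Delta>)" G] d s S by simp
      then show ?thesis using botI[of \<Gamma> G] by (cases "G \<in># \<Delta>") simp_all
    qed
  qed
qed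

theorem theorem6:
  fixes \<Gamma> :: "fm multiset" and B :: fm
  assumes "C_proof_using (UNIV - {ImpL, OrR, ExR}) (\<Gamma>, {#B#})"
  shows "I_provable (\<Gamma>, {#B#})"
  using main[of B] assms by simp

end
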